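(* For $\psi\in[0,\pi]$ and $n\in\mathbb N_0$ let $\mu_n(\psi)=\sqrt{\sum_{j=-n}^n\frac{8\pi^2}{2n+1}|\widetilde P_n^j(0)|^2 s_j(\psi)^2}$. Then for odd $n=2m-1$, \[ \lim_{m\to\infty}\frac{4m-1}{4}\,\mu_{2m-1}(\psi)^2=\begin{cases}4\pi\psi,&\psi\in[0,\frac\pi2],\\ 4\pi^2-4\pi\psi,&\psi\in[\frac\pi2,\pi],\end{cases} \] and for even $n=2m$, \[ \lim_{m\to\infty}\frac{4m+1}{4}\,\mu_{2m}(\psi)^2=\begin{cases}4\pi\psi,&\psi\in[0,\frac\pi2],\\ 12\pi\psi-4\pi^2,&\psi\in[\frac\pi2,\pi].\end{cases} \]
   Context: Associated Legendre functions $P_n^k(t)=\frac{(-1)^k}{2^n n!}(1-t^2)^{k/2}\frac{d^{n+k}}{dt^{n+k}}(t^2-1)^n$ for $k=0,\dots,n$; normalized $\widetilde P_n^k=\sqrt{\frac{2n+1}{4\pi}\frac{(n-k)!}{(n+k)!}}P_n^k$ and $\widetilde P_n^{-k}=(-1)^k\widetilde P_n^k$. Let $s_0(\psi)=2\psi$ and $s_j(\psi)=\frac{2\sin(j\psi)}{j}$ for $j\ne0$. (For $\psi\in(0,\pi)$, $\mu_n(\psi)$ are the singular values of the fixed-length great-circle-arc transform $f\mapsto\int_{-\psi}^{\psi}f(Q^{-1}(\cos\varphi,\sin\varphi,0)^\top)\,d\varphi$, $Q\in\mathrm{SO}(3)$.) *)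

theory Defs
  imports "HOL-Analysis.Analysis" "HOL-Computational_Algebra.Polynomial"
begin

definition assoc_legendre :: "nat \<Rightarrow> nat \<Rightarrow> real \<Rightarrow> real" where
  "assoc_legendre n k t =
     (-1) ^ k / (2 ^ n * fact n) * (1 - t\<^sup>2) powr (real k / 2) *
     poly ((pderiv ^^ (n + k)) ([:-1, 0, 1:] ^ n)) t"

definition norm_assoc_legendre :: "nat \<Rightarrow> int \<Rightarrow> real \<Rightarrow> real" where
  "norm_assoc_legendre n j t =
     (let k = nat \<bar>j\<bar>;
          v = sqrt ((2 * real n + 1) / (4 * pi) * (fact (n - k) / fact (n + k))) *
              assoc_legendre n k t
      in if j \<ge> 0 then v else (-1) ^ k * v)"

definition s_fun :: "int \<Rightarrow> real \<Rightarrow> real" where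
  "s_fun j \<psi> = (if j = 0 then 2 * \<psi> else 2 * sin (real_of_int j * \<psi>) / real_of_int j)"

definition mu :: "nat \<Rightarrow> real \<Rightarrow> real" where
  "mu n \<psi> = sqrt (\<Sum>j = - int n..int n.
      8 * pi\<^sup>2 / (2 * real n + 1) * \<bar>norm_assoc_legendre n j 0\<bar>\<^sup>2 * (s_fun j \<psi>)\<^sup>2)"

end

theory Submission
  imports Defs "HOL-Real_Asymp.Real_Asymp"
begin


lemma arctan_series:
  fixes r \<theta> :: real
  assumes r: "0 \<le> r" "r < 1"
  shows "(\<lambda>n. r ^ n * sin (real n * \<theta>) / real n) sums arctan (r * sin \<theta> / (1 - r * cos \<theta>))"
proof -
  define w where "w = complex_of_real r * cis \<theta>"
  have nw: "norm (- w) < 1" using r by (simp add: w_def norm_mult)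
  have "(\<lambda>n. (-1)^Suc n / of_nat n * (-w)^n) sums ln (1 + (-w))"
    by (rule Ln_series[OF nw])
  moreover have "(\<lambda>n. (-1)^Suc n / of_nat n * (-w)^n) = (\<lambda>n. - (w^n / of_nat n))"
  proof
    fix n
    have "((-1::complex)^Suc n) * (-w)^n = - (w^n)"
      by (simp add: power_minus')
    then show "(-1)^Suc n / of_nat n * (-w)^n = - (w^n / of_nat n)"
      by (metis (no_types, lifting) divide_inverse minus_divide_left mult.assoc mult.commute)
  qed
  ultimately have s1: "(\<lambda>n. - (w^n / of_nat n)) sums Ln (1 - w)" by simp
  have s2: "(\<lambda>n. Im (- (w^n / of_nat n))) sums Im (Ln (1 - w))"
    using sums_Im[OF s1] .
  have wn: "w ^ n = complex_of_real (r^n) * cis (real n * \<theta>)" for n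
    by (simp add: w_def power_mult_distrib Complex.DeMoivre)
  have imt: "Im (- (w^n / of_nat n)) = - (r ^ n * sin (real n * \<theta>) / real n)" for n
    by (simp add: wn Im_divide_of_nat)
  have re_pos: "Re (1 - w) > 0"
  proof -
    have "r * cos \<theta> \<le> r" using r by (simp add: mult_left_le)
    then show ?thesis using r by (simp add: w_def)
  qed
  have ne: "1 - w \<noteq> 0" using re_pos by auto
  have "Im (Ln (1 - w)) = Arg (1 - w)" using Arg_eq_Im_Ln[OF ne] by simp
  also have "\<dots> = arctan (Im (1 - w) / Re (1 - w))" by (rule arg_conv_arctan[OF re_pos])
  also have "\<dots> = - arctan (r * sin \<theta> / (1 - r * cos \<theta>))"
    by (simp add: w_def arctan_minus)
  finally have "(\<lambda>n. - (r ^ n * sin (real n * \<theta>) / real n)) sums - arctan (r * sin \<theta> / (1 - r * cos \<theta>))"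
    using s2 by (simp only: imt)
  from sums_minus[OF this] show ?thesis by simp
qed

lemma abel_int:
  fixes r x :: real
  assumes r: "0 \<le> r" "r < 1" and x: "0 \<le> x"
  shows "((\<lambda>t. arctan (r * sin (2*t) / (1 - r * cos (2*t)))) has_integral
           (\<Sum>n. r^n * (sin (real n * x))^2 / (real n)^2)) {0..x}"
proof -
  define f where "f n y = r^n * (sin (real n * y))^2 / (real n)^2" for n y
  define f' where "f' n y = r^n * sin (real n * (2*y)) / real n" for n y
  have der: "(f n has_field_derivative f' n y) (at y within UNIV)" for n y
  proof (cases "n = 0")
    case True
    have "f n = (\<lambda>y. 0)" using True by (simp add: f_def fun_eq_iff)
    then show ?thesis using True by (simp add: f'_def)
  next
    case False
    have fe: "f n = (\<lambda>y. (r^n / (real n)^2) * (sin (real n * y))^2)" by (simp add: f_def fun_eq_iff)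
    have g: "((\<lambda>y. (sin (real n * y))^2) has_field_derivative 2 * sin (real n * y) * (cos (real n * y) * real n)) (at y)"
      by (auto intro!: derivative_eq_intros)
    have "(f n has_field_derivative (r^n / (real n)^2) * (2 * sin (real n * y) * (cos (real n * y) * real n))) (at y)"
      unfolding fe by (rule DERIV_cmult[OF g])
    moreover have "(r^n / (real n)^2) * (2 * sin (real n * y) * (cos (real n * y) * real n)) = f' n y"
    proof -
      have "sin (real n * (2*y)) = 2 * sin (real n * y) * cos (real n * y)"
        using sin_double[of "real n * y"] by (simp add: algebra_simps)
      then show ?thesis using False by (simp add: f'_def power2_eq_square field_simps)
    qed
    ultimately show ?thesis by simp
  qed
  have uc: "uniformly_convergent_on UNIV (\<lambda>n y. \<Sum>i<n. f' i y)"
  proof (rule Weierstrass_m_test'[where M="\<lambda>n. r^n"])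
    fix n and y :: real
    have "\<bar>sin (real n * (2*y)) / real n\<bar> \<le> 1"
      by (cases "n = 0") (auto simp: abs_sin_le_one divide_le_eq_1 abs_divide intro: order.trans[OF abs_sin_le_one])
    then have "r^n * \<bar>sin (real n * (2*y)) / real n\<bar> \<le> r^n * 1"
      using r by (intro mult_left_mono) auto
    then show "norm (f' n y) \<le> r^n" using r by (simp add: f'_def abs_mult)
  next
    show "summable (\<lambda>n. r^n)" using r by (simp add: summable_geometric)
  qed
  have s0: "summable (\<lambda>n. f n 0)" by (simp add: f_def)
  have D: "((\<lambda>y. \<Sum>n. f n y) has_field_derivative (\<Sum>n. f' n y)) (at y)" for y
    using has_field_derivative_series'(2)[OF convex_UNIV der uc _ s0, of y] by simp
  have E: "(\<Sum>n. f' n y) = arctan (r * sin (2*y) / (1 - r * cos (2*y)))" for y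
    using sums_unique[OF arctan_series[OF r, of "2*y"]] by (simp add: f'_def)
  have "((\<lambda>t. \<Sum>n. f' n t) has_integral ((\<Sum>n. f n x) - (\<Sum>n. f n 0))) {0..x}"
    by (rule fundamental_theorem_of_calculus[OF x])
       (auto intro: has_field_derivative_at_within[OF D] simp: has_real_derivative_iff_has_vector_derivative[symmetric])
  then show ?thesis by (simp add: E f_def)
qed

lemma arctan_cot_id:
  fixes t :: real assumes "0 < t" "t < pi"
  shows "arctan (sin (2*t) / (1 - cos (2*t))) = pi/2 - t"
proof -
  have st: "sin t > 0" using assms by (simp add: sin_gt_zero)
  have e1: "sin (2*t) = 2 * sin t * cos t" by (rule sin_double)
  have e2: "1 - cos (2*t) = 2*(sin t)^2" by (simp add: cos_double_sin)
  have "sin (2*t) / (1 - cos (2*t)) = (2 * sin t * cos t) / (2 * (sin t)^2)" by (simp only: e1 e2)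
  also have "\<dots> = cos t / sin t" using st by (simp add: power2_eq_square)
  finally have "sin (2*t) / (1 - cos (2*t)) = cos t / sin t" .
  also have "\<dots> = tan (pi/2 - t)" by (simp add: tan_def sin_diff cos_diff)
  finally show ?thesis using assms by (simp add: arctan_tan)
qed

lemma sin_sq_series:
  fixes x :: real
  assumes x: "0 \<le> x" "x \<le> pi"
  shows "(\<lambda>n. (sin (real n * x))^2 / (real n)^2) sums (x * (pi - x) / 2)"
proof -
  have sin_sq_le1: "(sin y)^2 \<le> (1::real)" for y :: real
    using sin_cos_squared_add[of "y::real"] zero_le_power2[of "cos y"] by linarith
  define r where "r j = real j / real (Suc j)" for j
  have r01: "0 \<le> r j" "r j < 1" for j by (auto simp: r_def)
  have rlim: "r \<longlonglongrightarrow> 1" unfolding r_def by (rule LIMSEQ_n_over_Suc_n)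
  define a where "a n j = r j ^ n * (sin (real n * x))^2 / (real n)^2" for n j
  have summ: "summable (\<lambda>n. inverse (real n ^ 2))" by (rule inverse_power_summable) simp
  have T: "(\<lambda>j. \<Sum>n. a n j) \<longlonglongrightarrow> (\<Sum>n. (sin (real n * x))^2 / (real n)^2)"
  proof (rule tannerys_theorem[THEN conjunct2, THEN conjunct2])
    fix n
    have "(\<lambda>j. r j ^ n * ((sin (real n * x))^2 / (real n)^2)) \<longlonglongrightarrow> 1 ^ n * ((sin (real n * x))^2 / (real n)^2)"
      by (intro tendsto_intros rlim)
    then show "(\<lambda>j. a n j) \<longlonglongrightarrow> (sin (real n * x))^2 / (real n)^2" by (simp add: a_def)
  next
    show "eventually (\<lambda>(n,j). norm (a n j) \<le> inverse (real n ^ 2)) (at_top \<times>\<^sub>F sequentially)"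
    proof (rule always_eventually, clarify)
      fix n j
      have "r j ^ n * (sin (real n * x))^2 \<le> 1 * 1"
        using r01[of j] by (intro mult_mono[OF power_le_one sin_sq_le1]) auto
      then show "norm (a n j) \<le> inverse (real n ^ 2)" using r01[of j]
        using mult_right_mono[OF _ inverse_nonnegative_iff_nonnegative[THEN iffD2, OF zero_le_power2[of "real n"]], of "r j ^ n * (sin (real n * x))^2" 1]
        by (simp add: a_def divide_inverse abs_mult)
    qed
  qed (use summ in auto)
  define L where "L t = arctan (sin (2*t) / (1 - cos (2*t)))" for t
  define g where "g j t = arctan (r j * sin (2*t) / (1 - r j * cos (2*t)))" for j t
  have gi: "(g j has_integral (\<Sum>n. a n j)) {0..x}" for j
    unfolding g_def a_def using abel_int[OF r01 x(1)] by simp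
  have d1: "g j integrable_on {0..x}" for j using gi by blast
  have d2: "(\<lambda>_. pi/2) integrable_on {0..x}" by (rule integrable_const_ivl)
  have d3: "norm (g j t) \<le> pi/2" for j t
      using arctan_bounded[of "r j * sin (2*t) / (1 - r j * cos (2*t))"] unfolding g_def real_norm_def by linarith
  have d4: "(\<lambda>j. g j t) \<longlonglongrightarrow> L t" for t
    proof (cases "1 - cos (2*t) = 0")
      case True
      then have c: "cos (2*t) = 1" by simp
      then have "sin (2*t) = 0" using sin_cos_squared_add[of "2*t"] by simp
      then show ?thesis by (simp add: g_def L_def)
    next
      case False
      have "(\<lambda>j. arctan (r j * sin (2*t) / (1 - r j * cos (2*t)))) \<longlonglongrightarrow> arctan (1 * sin (2*t) / (1 - 1 * cos (2*t)))"
        using False by (intro tendsto_intros rlim) auto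
      then show ?thesis by (simp add: g_def L_def)
    qed
  note DC = dominated_convergence[OF d1 d2 d3 d4]
  have I1: "integral {0..x} L = (\<Sum>n. (sin (real n * x))^2 / (real n)^2)"
  proof -
    have "(\<lambda>j. integral {0..x} (g j)) = (\<lambda>j. \<Sum>n. a n j)"
      using gi by (intro ext integral_unique)
    with DC(2) have "(\<lambda>j. \<Sum>n. a n j) \<longlonglongrightarrow> integral {0..x} L" by simp
    from LIMSEQ_unique[OF this T] show ?thesis .
  qed
  have I2: "integral {0..x} L = integral {0..x} (\<lambda>t. pi/2 - t)"
  proof (rule integral_spike[of "{0,x}"])
    show "negligible {0,x}" by simp
    show "pi/2 - t = L t" if "t \<in> {0..x} - {0,x}" for t
      unfolding L_def using that x by (intro arctan_cot_id[symmetric]) auto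
  qed
  have "((\<lambda>t. pi/2 - t) has_integral ((pi/2*x - x^2/2) - (pi/2*0 - 0^2/2))) {0..x}"
    by (rule fundamental_theorem_of_calculus[OF x(1)])
       (auto intro!: derivative_eq_intros simp: has_real_derivative_iff_has_vector_derivative[symmetric])
  then have I3: "integral {0..x} (\<lambda>t. pi/2 - t) = x * (pi - x) / 2"
    by (simp add: integral_unique power2_eq_square algebra_simps)
  have "summable (\<lambda>n. (sin (real n * x))^2 / (real n)^2)"
  proof (rule summable_comparison_test[OF _ summ])
    show "\<exists>N. \<forall>n\<ge>N. norm ((sin (real n * x))^2 / (real n)^2) \<le> inverse (real n ^ 2)"
    proof (intro exI allI impI)
      fix n :: nat
      have "(sin (real n * x))^2 * inverse ((real n)^2) \<le> 1 * inverse ((real n)^2)"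
        by (rule mult_right_mono[OF sin_sq_le1]) simp
      then show "norm ((sin (real n * x))^2 / (real n)^2) \<le> inverse (real n ^ 2)"
        by (simp add: divide_inverse)
    qed
  qed
  then show ?thesis using I1 I2 I3 by (simp add: summable_sums_iff)
qed

lemma sum_split_even_odd:
  fixes f :: "nat \<Rightarrow> real"
  shows "(\<Sum>n<2*m. f n) = (\<Sum>i<m. f (2*i)) + (\<Sum>i<m. f (2*i+1))"
  by (induction m) (simp_all add: algebra_simps)

lemma sums_odd_part:
  fixes f :: "nat \<Rightarrow> real"
  assumes "f sums s" "(\<lambda>i. f (2*i)) sums se"
  shows "(\<lambda>i. f (2*i+1)) sums (s - se)"
proof -
  have "(\<lambda>n. \<Sum>i<n. f i) \<longlonglongrightarrow> s" using assms(1) by (simp add: sums_def)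
  then have "(\<lambda>m. \<Sum>i<2*m. f i) \<longlonglongrightarrow> s"
    using LIMSEQ_subseq_LIMSEQ[of _ s "\<lambda>m. 2*m"] by (simp add: strict_mono_def o_def)
  moreover have "(\<lambda>m. \<Sum>i<m. f (2*i)) \<longlonglongrightarrow> se" using assms(2) by (simp add: sums_def)
  ultimately have "(\<lambda>m. (\<Sum>i<2*m. f i) - (\<Sum>i<m. f (2*i))) \<longlonglongrightarrow> s - se"
    by (rule tendsto_diff)
  then show ?thesis by (simp add: sums_def sum_split_even_odd)
qed

lemma sin_sq_series_ext:
  fixes y :: real
  assumes "0 \<le> y" "y \<le> 2*pi"
  shows "(\<lambda>n. (sin (real n * y))^2 / (real n)^2) sums (if y \<le> pi then y * (pi - y) / 2 else (2*pi - y) * (y - pi) / 2)"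
proof (cases "y \<le> pi")
  case True then show ?thesis using sin_sq_series[of y] assms by simp
next
  case False
  have e: "(sin (real n * y))^2 = (sin (real n * (2*pi - y)))^2" for n
  proof -
    have "sin (real n * (2*pi - y)) = sin (2 * real n * pi - real n * y)" by (simp add: algebra_simps)
    also have "\<dots> = - sin (real n * y)"
      using sin_diff[of "2 * real n * pi" "real n * y"] by simp
    finally show ?thesis by simp
  qed
  have "(\<lambda>n. (sin (real n * (2*pi - y)))^2 / (real n)^2) sums ((2*pi - y) * (pi - (2*pi - y)) / 2)"
    using sin_sq_series[of "2*pi - y"] assms False by simp
  then have "(\<lambda>n. (sin (real n * y))^2 / (real n)^2) sums ((2*pi - y) * (pi - (2*pi - y)) / 2)"
    by (simp only: e[symmetric])
  then show ?thesis using False by (simp add: algebra_simps)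
qed

lemma odd_series:
  fixes \<psi> :: real
  assumes "0 \<le> \<psi>" "\<psi> \<le> pi"
  shows "(\<lambda>i. (sin (real (2*i+1) * \<psi>))^2 / (real (2*i+1))^2) sums
           (if \<psi> \<le> pi/2 then pi * \<psi> / 4 else pi * (pi - \<psi>) / 4)"
proof -
  define f where "f n = (sin (real n * \<psi>))^2 / (real n)^2" for n
  have s1: "f sums (\<psi> * (pi - \<psi>) / 2)" unfolding f_def using sin_sq_series[OF assms] .
  have "(\<lambda>i. (sin (real i * (2*\<psi>)))^2 / (real i)^2) sums
          (if 2*\<psi> \<le> pi then 2*\<psi> * (pi - 2*\<psi>) / 2 else (2*pi - 2*\<psi>) * (2*\<psi> - pi) / 2)"
    using sin_sq_series_ext[of "2*\<psi>"] assms by simp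
  from sums_mult[OF this, of "1/4"]
  have s2: "(\<lambda>i. f (2*i)) sums (1/4 * (if 2*\<psi> \<le> pi then 2*\<psi> * (pi - 2*\<psi>) / 2 else (2*pi - 2*\<psi>) * (2*\<psi> - pi) / 2))"
    by (simp add: f_def power2_eq_square mult.assoc mult.left_commute)
  have eq: "\<psi> * (pi - \<psi>) / 2 - (1/4 * (if 2*\<psi> \<le> pi then 2*\<psi> * (pi - 2*\<psi>) / 2 else (2*pi - 2*\<psi>) * (2*\<psi> - pi) / 2))
     = (if \<psi> \<le> pi/2 then pi * \<psi> / 4 else pi * (pi - \<psi>) / 4)"
    by (auto simp: field_simps)
  from sums_odd_part[OF s1 s2] show ?thesis
    unfolding eq f_def by simp
qed


definition cb :: "nat \<Rightarrow> real" where "cb n = fact (2*n) / (4^n * (fact n)^2)"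

lemma cb_0 [simp]: "cb 0 = 1" by (simp add: cb_def)

lemma cb_Suc: "cb (Suc n) = cb n * (2 * real n + 1) / (2 * real n + 2)"
proof -
  define N where "N = real n + 1"
  have N: "N > 0" by (simp add: N_def)
  have f2: "fact (2 * Suc n) = (fact (2*n) :: real) * (2 * N - 1) * (2 * N)"
    by (simp add: algebra_simps N_def)
  have f1: "fact (Suc n) = (fact n :: real) * N" by (simp add: algebra_simps N_def)
  have e: "2 * real n + 1 = 2 * N - 1" "2 * real n + 2 = 2 * N" by (simp_all add: N_def)
  show ?thesis unfolding cb_def f2 f1 e using N by (simp add: field_simps power2_eq_square)
qed

lemma cb_pos: "cb n > 0" by (simp add: cb_def)

lemma cb_sq_le: "(2 * real n + 1) * cb n ^ 2 \<le> 1"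
proof (induction n)
  case 0 then show ?case by simp
next
  case (Suc n)
  have "(2 * real (Suc n) + 1) * cb (Suc n) ^ 2 =
        ((2 * real n + 1) * cb n ^ 2) * ((2 * real n + 1) * (2 * real n + 3) / (2 * real n + 2)^2)"
  proof -
    define N where "N = real n + 1"
    have N: "N > 0" by (simp add: N_def)
    have e: "2 * real n + 1 = 2 * N - 1" "2 * real n + 2 = 2 * N" "2 * real n + 3 = 2 * N + 1"
        "2 * real (Suc n) + 1 = 2 * N + 1" by (simp_all add: N_def)
    show ?thesis unfolding cb_Suc e using N by (simp add: field_simps power2_eq_square)
  qed
  also have "\<dots> \<le> 1 * 1"
  proof (rule mult_mono)
    have "(2 * real n + 1) * (2 * real n + 3) \<le> (2 * real n + 2)^2"
      by (simp add: power2_eq_square algebra_simps)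
    then show "(2 * real n + 1) * (2 * real n + 3) / (2 * real n + 2)^2 \<le> 1"
      by (simp add: divide_le_eq_1)
  qed (use Suc in auto)
  finally show ?case by simp
qed

lemma cb_le1: "cb n \<le> 1"
proof -
  have "cb n ^ 2 \<le> 1"
  proof -
    have "1 * cb n ^ 2 \<le> (2 * real n + 1) * cb n ^ 2" by (intro mult_right_mono) auto
    then show ?thesis using cb_sq_le[of n] by simp
  qed
  then show ?thesis using cb_pos[of n] by (simp add: power_le_one_iff)
qed

lemma aux_t1: "(N::real) \<ge> 1 \<Longrightarrow> (2*N+1) * ((2*N-1)/(2*N))^2 * (4*N^2/((2*N-1)*(2*N+1))) = 2*N-1"
proof -
  assume N: "N \<ge> 1"
  have a: "((2*N-1)/(2*N))^2 = (2*N-1)^2/(4*N^2)" by (simp add: power_divide power_mult_distrib)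
  have n: "4*N^2 \<noteq> 0" "(2*N-1)*(2*N+1) \<noteq> 0" using N by auto
  have "(2*N+1) * ((2*N-1)^2/(4*N^2)) * (4*N^2/((2*N-1)*(2*N+1))) = (2*N+1)*(2*N-1)^2 / ((2*N-1)*(2*N+1))"
    using n by simp
  also have "\<dots> = 2*N-1" using n by (simp add: power2_eq_square)
  finally show ?thesis unfolding a .
qed
lemma cb_wallis: "(2 * real n + 1) * cb n ^ 2 * (\<Prod>k=1..n. (4*real k^2) / (4*real k^2 - 1)) = 1"
proof (induction n)
  case 0 then show ?case by simp
next
  case (Suc n)
  have nz: "4 * (real n + 1)^2 - 1 = (2 * real n + 1) * (2 * real n + 3)"
    by (simp add: algebra_simps power2_eq_square)
  define P where "P = (\<Prod>k=1..n. (4*real k^2) / (4*real k^2 - 1))"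
  define N where "N = real n + 1"
  have N: "N \<ge> 1" by (simp add: N_def)
  have pr: "(\<Prod>k=1..Suc n. (4*real k^2) / (4*real k^2 - 1)) = P * (4*N^2/(4*N^2-1))"
    by (simp add: P_def N_def prod.nat_ivl_Suc' mult.commute add.commute)
  have e: "2 * real n + 1 = 2 * N - 1" "2 * real n + 2 = 2 * N"
        "2 * real (Suc n) + 1 = 2 * N + 1" by (simp_all add: N_def)
  have f: "4*N^2-1 = (2*N-1)*(2*N+1)" by (simp add: algebra_simps power2_eq_square)
  have "(2 * real (Suc n) + 1) * cb (Suc n) ^ 2 * (\<Prod>k=1..Suc n. (4*real k^2) / (4*real k^2 - 1))
      = (2*N+1) * (cb n*(2*N-1)/(2*N))^2 * (P * (4*N^2/(4*N^2-1)))"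
    unfolding pr cb_Suc e by simp
  also have "\<dots> = (2*N-1) * cb n^2 * P"
  proof -
    have "(2*N+1) * (cb n*(2*N-1)/(2*N))^2 * (P * (4*N^2/((2*N-1)*(2*N+1))))
        = cb n^2 * P * ((2*N+1) * ((2*N-1)/(2*N))^2 * (4*N^2/((2*N-1)*(2*N+1))))"
      by (simp add: power_divide power_mult_distrib)
    also have "\<dots> = (2*N-1) * cb n^2 * P" using aux_t1[OF N] by simp
    finally show ?thesis unfolding f .
  qed
  also have "\<dots> = 1" using Suc.IH by (simp add: P_def e)
  finally show ?case .
qed

lemma d_lim: "(\<lambda>n. (2 * real n + 1) * cb n ^ 2) \<longlonglongrightarrow> 2 / pi"
proof -
  have w: "(\<lambda>n. \<Prod>k=1..n. (4*real k^2) / (4*real k^2 - 1)) \<longlonglongrightarrow> pi / 2" by (rule wallis)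
  have "(\<lambda>n. inverse (\<Prod>k=1..n. (4*real k^2) / (4*real k^2 - 1))) \<longlonglongrightarrow> inverse (pi/2)"
    by (rule tendsto_inverse[OF w]) simp
  moreover have "(2 * real n + 1) * cb n ^ 2 = inverse (\<Prod>k=1..n. (4*real k^2) / (4*real k^2 - 1))" for n
    using inverse_unique[of "\<Prod>k=1..n. (4*real k^2) / (4*real k^2 - 1)" "(2 * real n + 1) * cb n ^ 2"] cb_wallis[of n]
    by (simp add: mult.commute)
  ultimately show ?thesis by simp
qed

definition dd :: "nat \<Rightarrow> real" where "dd n = (2 * real n + 1) * cb n ^ 2"

lemma cb_dd: "cb n = sqrt (dd n) / sqrt (2 * real n + 1)"
proof -
  have "sqrt (dd n) = sqrt (2 * real n + 1) * cb n"
    using cb_pos[of n] by (simp add: dd_def real_sqrt_mult)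
  then show ?thesis by simp
qed

lemma w_lim:
  fixes i j :: nat and e :: real
  shows "(\<lambda>m. (4 * real m + e) * cb (m + i) * cb (m - j)) \<longlonglongrightarrow> 4 / pi"
proof -
  have d0: "dd \<longlonglongrightarrow> 2/pi" unfolding dd_def by (rule d_lim)
  have d1: "(\<lambda>m. dd (m + i)) \<longlonglongrightarrow> 2/pi" by (rule LIMSEQ_ignore_initial_segment[OF d0])
  have d2: "(\<lambda>m. dd (m - j)) \<longlonglongrightarrow> 2/pi" by (rule LIMSEQ_offset[where k=j]) (simp add: d0)
  have B: "(\<lambda>m. (4 * real m + e) / sqrt ((2 * real m + 2 * real i + 1) * (2 * real m - 2 * real j + 1))) \<longlonglongrightarrow> 2"
    by real_asymp
  have "(\<lambda>m. (4 * real m + e) / sqrt ((2 * real m + 2 * real i + 1) * (2 * real m - 2 * real j + 1)) * sqrt (dd (m + i) * dd (m - j)))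
        \<longlonglongrightarrow> 2 * sqrt (2/pi * (2/pi))"
    by (intro tendsto_intros B d1 d2)
  also have "2 * sqrt (2/pi * (2/pi)) = 4 / pi"
  proof -
    have "sqrt (2/pi * (2/pi)) = 2/pi" using pi_gt_zero by (intro real_sqrt_unique) (auto simp: power2_eq_square)
    then show ?thesis by simp
  qed
  finally have L: "(\<lambda>m. (4 * real m + e) / sqrt ((2 * real m + 2 * real i + 1) * (2 * real m - 2 * real j + 1)) * sqrt (dd (m + i) * dd (m - j)))
        \<longlonglongrightarrow> 4 / pi" .
  show ?thesis
  proof (rule Lim_transform_eventually[OF L])
    show "eventually (\<lambda>m. (4 * real m + e) / sqrt ((2 * real m + 2 * real i + 1) * (2 * real m - 2 * real j + 1)) * sqrt (dd (m + i) * dd (m - j))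
         = (4 * real m + e) * cb (m + i) * cb (m - j)) sequentially"
      using eventually_ge_at_top[of j]
    proof eventually_elim
      case (elim m)
      have rj: "real (m - j) = real m - real j" using elim by simp
      have a: "2 * real (m+i) + 1 = 2 * real m + 2 * real i + 1" by simp
      have b: "2 * real (m-j) + 1 = 2 * real m - 2 * real j + 1" using rj by simp
      show ?case unfolding cb_dd[of "m+i"] cb_dd[of "m-j"] a b real_sqrt_mult
        by (simp add: divide_inverse mult_ac)
    qed
  qed
qed

lemma w_bound:
  assumes "q \<le> p"
  shows "(2 * real p + 2 * real q + 2) * cb p * cb q \<le> 2 * sqrt (2 * real (p - q) + 1)"
proof -
  define X where "X = 2 * real p + 1"
  define Y where "Y = 2 * real q + 1"
  have Y1: "Y \<ge> 1" and XY: "Y \<le> X" using assms by (auto simp: X_def Y_def)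
  have cp: "cb p ^ 2 \<le> 1 / X" using cb_sq_le[of p] by (simp add: X_def field_simps)
  have cq: "cb q ^ 2 \<le> 1 / Y" using cb_sq_le[of q] by (simp add: Y_def field_simps)
  have A0: "0 \<le> (X + Y) * cb p * cb q" using cb_pos[of p] cb_pos[of q] Y1 XY by simp
  have "((X + Y) * cb p * cb q)^2 = (X+Y)^2 * (cb p ^ 2 * cb q ^ 2)" by (simp add: power_mult_distrib)
  also have "\<dots> \<le> (X+Y)^2 * (1/X * (1/Y))"
    using Y1 XY by (intro mult_left_mono mult_mono cp cq) auto
  also have "\<dots> \<le> 4 * (X - Y + 1)"
  proof -
    have "(X+Y)^2 \<le> (2*X)^2" using Y1 XY by (intro power_mono; linarith)
    moreover have "(2*X)^2 * (1/X * (1/Y)) = 4 * (X / Y)" using Y1 XY by (simp add: power2_eq_square field_simps)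
    moreover have "X / Y \<le> X - Y + 1"
    proof -
      have "0 \<le> (Y-1)*(X-Y)" using Y1 XY by simp
      moreover have "(X - Y + 1) * Y - X = (Y-1)*(X-Y)" by (simp add: algebra_simps)
      ultimately have "X \<le> (X - Y + 1) * Y" by linarith
      then show ?thesis using Y1 by (simp add: divide_le_eq)
    qed
    moreover have "0 \<le> 1/X * (1/Y)" using Y1 XY by simp
    ultimately show ?thesis
      by (metis (no_types, opaque_lifting) mult_left_mono mult_right_mono order_trans zero_le_numeral zero_le_power2)
  qed
  finally have "((X + Y) * cb p * cb q)^2 \<le> 4 * (X - Y + 1)" .
  then have "(X + Y) * cb p * cb q \<le> sqrt (4 * (X - Y + 1))" using A0 by (simp add: real_le_rsqrt)
  also have "sqrt (4 * (X - Y + 1)) = 2 * sqrt (2 * real (p - q) + 1)"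
  proof -
    have "4 * (X - Y + 1) = 4 * (2 * real (p - q) + 1)"
      using assms by (simp add: X_def Y_def of_nat_diff algebra_simps)
    then show ?thesis by (simp only: real_sqrt_mult real_sqrt_four)
  qed
  finally show ?thesis by (simp add: X_def Y_def algebra_simps)
qed


lemma coeff_pderiv_iter:
  "coeff ((pderiv ^^ m) (p :: real poly)) i = pochhammer (real i + 1) m * coeff p (i + m)"
proof (induction m arbitrary: p i)
  case 0 then show ?case by simp
next
  case (Suc m)
  have "(pderiv ^^ Suc m) p = (pderiv ^^ m) (pderiv p)" by (simp only: funpow_Suc_right o_def)
  then have "coeff ((pderiv ^^ Suc m) p) i = pochhammer (real i + 1) m * (real (Suc (i + m)) * coeff p (Suc (i + m)))"
    by (simp add: Suc.IH coeff_pderiv)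
  also have "\<dots> = pochhammer (real i + 1) (Suc m) * coeff p (i + Suc m)"
    by (simp add: pochhammer_Suc algebra_simps)
  finally show ?case .
qed

lemma coeff_pderiv_iter0: "coeff ((pderiv ^^ m) (p :: real poly)) 0 = fact m * coeff p m"
  using coeff_pderiv_iter[of m p 0] by (simp add: pochhammer_fact)

lemma coeff_Q:
  "coeff ([:-1, 0, 1:] ^ n :: real poly) i =
     (if even i \<and> i div 2 \<le> n then (-1)^(n - i div 2) * real (n choose (i div 2)) else 0)"
proof -
  have P: "[:-1, 0, 1:] = monom (1::real) 2 + [:-1:]"
    by (auto simp: poly_eq_iff coeff_monom coeff_pCons numeral_2_eq_2 split: nat.split)
  have tm: "of_nat (n choose k) * monom (1::real) 2 ^ k * [:-1:] ^ (n - k) =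
              monom (real (n choose k) * (-1)^(n-k)) (2*k)" for k
    by (simp add: monom_power of_nat_poly poly_const_pow smult_monom mult.commute mult.left_commute)
  have "[:-1, 0, 1:] ^ n = (\<Sum>k\<le>n. monom (real (n choose k) * (-1)^(n-k)) (2*k))"
    unfolding P binomial_ring tm ..
  then have "coeff ([:-1, 0, 1:] ^ n :: real poly) i =
      (\<Sum>k\<le>n. if k = i div 2 \<and> even i then real (n choose k) * (-1)^(n-k) else 0)"
    by (auto simp: coeff_sum coeff_monom intro!: sum.cong)
  also have "\<dots> = (if even i \<and> i div 2 \<le> n then (-1)^(n - i div 2) * real (n choose (i div 2)) else 0)"
    by (auto simp: sum.delta' mult.commute)
  finally show ?thesis .
qed

definition W :: "nat \<Rightarrow> nat \<Rightarrow> real" where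
  "W n k = (if even (n + k) then cb ((n + k) div 2) * cb ((n - k) div 2) else 0)"

lemma AL0: "assoc_legendre n k 0 = (-1)^k / (2^n * fact n) *
   (fact (n+k) * (if even (n+k) \<and> (n+k) div 2 \<le> n then (-1)^(n - (n+k) div 2) * real (n choose ((n+k) div 2)) else 0))"
  unfolding assoc_legendre_def by (simp add: poly_0_coeff_0 coeff_pderiv_iter0 coeff_Q)

lemma aux_cancel: "(N::real) \<noteq> 0 \<Longrightarrow> 8 * pi\<^sup>2 / N * (N / (4 * pi)) = 2 * pi"
  by (simp add: field_simps power2_eq_square)

lemma weight:
  assumes kn: "nat \<bar>j\<bar> \<le> n"
  shows "8 * pi\<^sup>2 / (2 * real n + 1) * \<bar>norm_assoc_legendre n j 0\<bar>\<^sup>2 = 2 * pi * W n (nat \<bar>j\<bar>)"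
proof -
  define k where "k = nat \<bar>j\<bar>"
  have kn': "k \<le> n" using kn by (simp add: k_def)
  define S where "S = (2 * real n + 1) / (4 * pi) * (fact (n - k) / fact (n + k))"
  have S0: "S \<ge> 0" by (simp add: S_def)
  have m1: "((-1::real)^k)^2 = 1" by (simp flip: power_mult)
  have NL: "\<bar>norm_assoc_legendre n j 0\<bar>\<^sup>2 = S * (assoc_legendre n k 0)\<^sup>2"
  proof -
    have "\<bar>norm_assoc_legendre n j 0\<bar>\<^sup>2 = (sqrt S * assoc_legendre n k 0)\<^sup>2"
      unfolding norm_assoc_legendre_def Let_def k_def[symmetric] S_def[symmetric]
      using m1 by (simp add: power_mult_distrib)
    also have "\<dots> = S * (assoc_legendre n k 0)\<^sup>2" using S0 by (simp add: power_mult_distrib)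
    finally show ?thesis .
  qed
  show ?thesis
  proof (cases "even (n + k)")
    case False
    then show ?thesis unfolding NL AL0 W_def k_def[symmetric] by simp
  next
    case True
    then obtain a where a: "n + k = 2 * a" by (metis dvdE)
    define b where "b = n - a"
    have an: "a \<le> n" using a kn' by simp
    have b2: "n - k = 2 * b" using a kn' by (simp add: b_def)
    have ab: "n = a + b" using an by (simp add: b_def)
    have ad: "(n + k) div 2 = a" "(n - k) div 2 = b" using a b2 by simp_all
    have ch: "real (n choose a) = fact n / (fact a * fact b)"
      using binomial_fact[OF an] by (simp add: b_def)
    have four: "(2::real) ^ (n * 2) = 4 ^ n" "((2::real) ^ n)\<^sup>2 = 4 ^ n"
      using power_mult[of "2::real" n 2] power_mult[of "2::real" 2 n] by (simp_all add: mult.commute)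
    have AL: "(assoc_legendre n k 0)\<^sup>2 = (fact (2*a) * (fact n / (fact a * fact b)))\<^sup>2 / (4^n * (fact n)\<^sup>2)"
      unfolding AL0 a ad using an ch four
      by (simp add: power_mult_distrib power_divide ch power_even_eq[symmetric] flip: power_mult)
    have "8 * pi\<^sup>2 / (2 * real n + 1) * \<bar>norm_assoc_legendre n j 0\<bar>\<^sup>2
        = 8 * pi\<^sup>2 / (2 * real n + 1) * ((2 * real n + 1) / (4 * pi) * (fact (2*b) / fact (2*a))) *
          ((fact (2*a) * (fact n / (fact a * fact b)))\<^sup>2 / (4^n * (fact n)\<^sup>2))"
      unfolding NL AL S_def a b2 by (simp add: field_simps)
    also have "\<dots> = (8 * pi\<^sup>2 / (2 * real n + 1) * ((2 * real n + 1) / (4 * pi))) * (fact (2*b) / fact (2*a) *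
          ((fact (2*a) * (fact n / (fact a * fact b)))\<^sup>2 / (4^n * (fact n)\<^sup>2)))" by simp
    also have "8 * pi\<^sup>2 / (2 * real n + 1) * ((2 * real n + 1) / (4 * pi)) = 2 * pi"
      by (rule aux_cancel) simp
    also have "(fact (2*b) :: real) / fact (2*a) * ((fact (2*a) * (fact n / (fact a * fact b)))\<^sup>2 / (4^n * (fact n)\<^sup>2))
        = fact (2*a) * fact (2*b) / (4^n * ((fact a)\<^sup>2 * (fact b)\<^sup>2))"
      by (simp add: field_simps power2_eq_square)
    also have "(4::real)^n = 4^a * 4^b" unfolding ab by (simp add: power_add)
    also have "2 * pi * (fact (2*a) * fact (2*b) / (4^a * 4^b * ((fact a)\<^sup>2 * (fact b)\<^sup>2)))
       = 2 * pi * (fact (2*a) / (4^a * (fact a)\<^sup>2) * (fact (2*b) / (4^b * (fact b)\<^sup>2)))"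
      by (simp add: field_simps)
    also have "\<dots> = 2 * pi * W n k" unfolding W_def ad using True by (simp add: cb_def)
    finally show ?thesis by (simp add: k_def)
  qed
qed


lemma sum_sym:
  fixes f :: "int \<Rightarrow> real"
  shows "(\<Sum>j = - int n..int n. f j) = f 0 + (\<Sum>k = 1..n. f (int k) + f (- int k))"
proof (induction n)
  case 0 then show ?case by simp
next
  case (Suc n)
  have e: "{- int (Suc n)..int (Suc n)} = insert (int (Suc n)) (insert (- int (Suc n)) {- int n..int n})"
    by auto
  have "(\<Sum>j = - int (Suc n)..int (Suc n). f j) = f (int (Suc n)) + (f (- int (Suc n)) + (\<Sum>j = - int n..int n. f j))"
    unfolding e by (subst sum.insert; simp)+
  also have "\<dots> = f 0 + (\<Sum>k = 1..Suc n. f (int k) + f (- int k))"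
    using Suc.IH by simp
  finally show ?case .
qed

lemma s_fun_neg: "s_fun (- j) \<psi> = s_fun j \<psi>"
  by (simp add: s_fun_def)

definition g :: "nat \<Rightarrow> real \<Rightarrow> nat \<Rightarrow> real" where
  "g n \<psi> k = W n k * (s_fun (int k) \<psi>)\<^sup>2"

lemma mu_sq_eq: "(mu n \<psi>)\<^sup>2 = 2 * pi * (g n \<psi> 0 + 2 * (\<Sum>k=1..n. g n \<psi> k))"
proof -
  define T where "T j = 8 * pi\<^sup>2 / (2 * real n + 1) * \<bar>norm_assoc_legendre n j 0\<bar>\<^sup>2 * (s_fun j \<psi>)\<^sup>2" for j
  have T0: "T j \<ge> 0" for j by (simp add: T_def)
  have "(mu n \<psi>)\<^sup>2 = (\<Sum>j = - int n..int n. T j)"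
    unfolding mu_def T_def[symmetric] using T0 by (simp add: sum_nonneg)
  also have "\<dots> = (\<Sum>j = - int n..int n. 2 * pi * W n (nat \<bar>j\<bar>) * (s_fun j \<psi>)\<^sup>2)"
  proof (rule sum.cong[OF refl])
    fix j assume "j \<in> {- int n..int n}"
    then have "nat \<bar>j\<bar> \<le> n" by auto
    then show "T j = 2 * pi * W n (nat \<bar>j\<bar>) * (s_fun j \<psi>)\<^sup>2"
      unfolding T_def using weight by simp
  qed
  also have "\<dots> = 2 * pi * W n 0 * (s_fun 0 \<psi>)\<^sup>2 + (\<Sum>k = 1..n. 2 * (2 * pi * g n \<psi> k))"
    by (subst sum_sym) (simp add: s_fun_neg g_def)
  also have "\<dots> = 2 * pi * (g n \<psi> 0 + 2 * (\<Sum>k=1..n. g n \<psi> k))"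
    by (simp add: g_def sum_distrib_left algebra_simps)
  finally show ?thesis .
qed

lemma sum_1_2m:
  fixes h :: "nat \<Rightarrow> real"
  shows "(\<Sum>k=1..2*m. h k) = (\<Sum>i<m. h (2*i+1)) + (\<Sum>i<m. h (2*i+2))"
proof (induction m)
  case 0 then show ?case by simp
next
  case (Suc m)
  have e: "{1..2 * Suc m} = insert (2*m+2) (insert (2*m+1) {1..2*m})" by auto
  show ?case unfolding e using Suc.IH by (subst sum.insert; simp)+
qed

lemma s_fun_sq: "k > 0 \<Longrightarrow> (s_fun (int k) \<psi>)\<^sup>2 = 4 * (sin (real k * \<psi>))\<^sup>2 / (real k)\<^sup>2"
  by (simp add: s_fun_def power_divide power_mult_distrib)

lemma odd_fin:
  assumes m: "m \<ge> 1"
  shows "(4 * real m - 1) / 4 * (mu (2*m-1) \<psi>)\<^sup>2 =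
    (\<Sum>i<m. (4 * real m - 1) * pi * cb (m+i) * cb (m-(1+i)) * (4 * (sin (real (2*i+1) * \<psi>))\<^sup>2 / (real (2*i+1))\<^sup>2))"
proof -
  define n where "n = 2*m-1"
  have g0: "g n \<psi> 0 = 0" using m by (simp add: g_def W_def n_def)
  have e: "{1..2*m} = insert (2*m) {1..n}" using m by (auto simp: n_def)
  have nin: "2*m \<notin> {1..n}" using m by (simp add: n_def)
  have on: "odd n" using m unfolding n_def by presburger
  have g2m: "g n \<psi> (2*m) = 0" unfolding g_def W_def using on by simp
  have s1: "(\<Sum>k=1..n. g n \<psi> k) = (\<Sum>k=1..2*m. g n \<psi> k)" unfolding e
    using nin by (subst sum.insert) (simp_all add: g2m)
  have ev: "g n \<psi> (2*i+2) = 0" for i using m by (simp add: g_def W_def n_def)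
  have od: "g n \<psi> (2*i+1) = cb (m+i) * cb (m-(1+i)) * (4 * (sin (real (2*i+1) * \<psi>))\<^sup>2 / (real (2*i+1))\<^sup>2)"
    if "i < m" for i
  proof -
    have a1: "(n + (2*i+1)) div 2 = m + i" using m by (simp add: n_def)
    have a2: "(n - (2*i+1)) div 2 = m - (1+i)" using that by (simp add: n_def)
    have a3: "even (n + (2*i+1))" using m by (simp add: n_def)
    show ?thesis unfolding g_def W_def a1 a2 using a3 s_fun_sq[of "2*i+1" \<psi>] by simp
  qed
  have "(4 * real m - 1) / 4 * (mu n \<psi>)\<^sup>2 = (4 * real m - 1) * pi * (\<Sum>i<m. g n \<psi> (2*i+1))"
    unfolding mu_sq_eq g0 s1 sum_1_2m ev by simp
  also have "\<dots> = (\<Sum>i<m. (4 * real m - 1) * pi * (cb (m+i) * cb (m-(1+i)) * (4 * (sin (real (2*i+1) * \<psi>))\<^sup>2 / (real (2*i+1))\<^sup>2)))"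
    unfolding sum_distrib_left by (rule sum.cong[OF refl]) (subst od; simp)
  finally show ?thesis by (simp add: n_def mult_ac)
qed

lemma even_fin:
  "(4 * real m + 1) / 4 * (mu (2*m) \<psi>)\<^sup>2 =
    (4 * real m + 1) * pi / 2 * cb (m+0) * cb (m-0) * (4 * \<psi>\<^sup>2) +
    (\<Sum>i<m. (4 * real m + 1) * pi * cb (m + Suc i) * cb (m - Suc i) * ((sin (real (Suc i) * (2*\<psi>)))\<^sup>2 / (real (Suc i))\<^sup>2))"
proof -
  have g0: "g (2*m) \<psi> 0 = cb m * cb m * (4 * \<psi>\<^sup>2)" by (simp add: g_def W_def s_fun_def power_mult_distrib)
  have od: "g (2*m) \<psi> (2*i+1) = 0" for i by (simp add: g_def W_def)
  have ev: "g (2*m) \<psi> (2*i+2) = cb (m + Suc i) * cb (m - Suc i) * ((sin (real (Suc i) * (2*\<psi>)))\<^sup>2 / (real (Suc i))\<^sup>2)"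
    if "i < m" for i
  proof -
    have a1: "(2*m + (2*i+2)) div 2 = m + Suc i" by simp
    have a2: "(2*m - (2*i+2)) div 2 = m - Suc i" using that by simp
    have a3: "even (2*m + (2*i+2))" by simp
    have sq: "(s_fun (int (2*i+2)) \<psi>)\<^sup>2 = (sin (real (Suc i) * (2*\<psi>)))\<^sup>2 / (real (Suc i))\<^sup>2"
    proof -
      have "(s_fun (int (2*i+2)) \<psi>)\<^sup>2 = 4 * (sin (real (2*i+2) * \<psi>))\<^sup>2 / (real (2*i+2))\<^sup>2"
        by (rule s_fun_sq) simp
      also have "real (2*i+2) = 2 * real (Suc i)" by simp
      also have "2 * real (Suc i) * \<psi> = real (Suc i) * (2*\<psi>)" by simp
      also have "(2 * real (Suc i))\<^sup>2 = 4 * (real (Suc i))\<^sup>2" by (simp add: power2_eq_square algebra_simps)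
      finally show ?thesis by simp
    qed
    show ?thesis unfolding g_def W_def a1 a2 sq using a3 by simp
  qed
  have "(4 * real m + 1) / 4 * (mu (2*m) \<psi>)\<^sup>2 = (4 * real m + 1) * pi / 2 * g (2*m) \<psi> 0 + (4 * real m + 1) * pi * (\<Sum>i<m. g (2*m) \<psi> (2*i+2))"
    unfolding mu_sq_eq sum_1_2m od by (simp add: field_simps)
  also have "\<dots> = (4 * real m + 1) * pi / 2 * (cb m * cb m * (4 * \<psi>\<^sup>2)) +
     (\<Sum>i<m. (4 * real m + 1) * pi * (cb (m + Suc i) * cb (m - Suc i) * ((sin (real (Suc i) * (2*\<psi>)))\<^sup>2 / (real (Suc i))\<^sup>2)))"
    unfolding sum_distrib_left g0 by (rule arg_cong2[where f="(+)", OF refl sum.cong[OF refl]]) (subst ev; simp)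
  finally show ?thesis by (simp add: mult_ac)
qed


definition MM :: "nat \<Rightarrow> real" where "MM i = 6 * pi * sqrt (real i) / (real i)\<^sup>2"

lemma MM_summable: "summable MM"
proof -
  have S: "summable (\<lambda>i. 6 * pi * (real i powr (-3/2)))"
    by (intro summable_mult) (simp add: summable_real_powr_iff)
  have E: "MM i = 6 * pi * (real i powr (-3/2))" for i
  proof (cases "i = 0")
    case True then show ?thesis by (simp add: MM_def)
  next
    case False
    then have ip: "real i > 0" by simp
    have "real i powr (1/2 - real 2) = real i powr (1/2) / real i powr (real 2)"
      by (rule powr_diff)
    moreover have "(1/2 - real 2) = -3/2" by simp
    ultimately have "real i powr (-3/2) = real i powr (1/2) / real i powr (real 2)" by simp
    also have "\<dots> = sqrt (real i) / (real i)\<^sup>2" using ip by (simp add: powr_half_sqrt powr_realpow)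
    finally show ?thesis by (simp add: MM_def)
  qed
  have "MM = (\<lambda>i. 6 * pi * (real i powr (-3/2)))" by (rule ext) (rule E)
  then show ?thesis using S by simp
qed

lemma sqrt_le3: "i \<ge> 1 \<Longrightarrow> c \<le> 5 \<Longrightarrow> sqrt (4 * real i + c) \<le> 3 * sqrt (real i)"
proof -
  assume "i \<ge> 1" "c \<le> 5"
  then have "4 * real i + c \<le> 9 * real i" by simp
  then have "sqrt (4 * real i + c) \<le> sqrt (9 * real i)" by (rule real_sqrt_le_mono)
  also have "\<dots> = 3 * sqrt (real i)" by (simp add: real_sqrt_mult)
  finally show ?thesis .
qed

lemma sin_sq_le1: "(sin y)\<^sup>2 \<le> (1::real)"
  using sin_cos_squared_add[of y] zero_le_power2[of "cos y"] by linarith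

lemma odd_part:
  fixes \<psi> :: real
  assumes "0 \<le> \<psi>" "\<psi> \<le> pi"
  shows "(\<lambda>m::nat. (4 * real m - 1) / 4 * (mu (2 * m - 1) \<psi>)\<^sup>2)
           \<longlonglongrightarrow> (if \<psi> \<le> pi / 2 then 4 * pi * \<psi> else 4 * pi\<^sup>2 - 4 * pi * \<psi>)"
proof -
  define s where "s i = 4 * (sin (real (2*i+1) * \<psi>))\<^sup>2 / (real (2*i+1))\<^sup>2" for i
  have s0: "0 \<le> s i" "s i \<le> 4 / (real (2*i+1))\<^sup>2" for i
    using sin_sq_le1[of "real (2*i+1) * \<psi>"] by (auto simp: s_def divide_right_mono)
  define a where "a i m = (if i < m then (4 * real m - 1) * pi * cb (m+i) * cb (m-(1+i)) * s i else 0)" for i m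
  have Q: "eventually (\<lambda>m. (4 * real m - 1) / 4 * (mu (2 * m - 1) \<psi>)\<^sup>2 = (\<Sum>i. a i m)) sequentially"
    using eventually_ge_at_top[of 1]
  proof eventually_elim
    case (elim m)
    have "(\<Sum>i. a i m) = (\<Sum>i<m. a i m)" by (rule suminf_finite) (auto simp: a_def)
    also have "\<dots> = (\<Sum>i<m. (4 * real m - 1) * pi * cb (m+i) * cb (m-(1+i)) * s i)"
      by (simp add: a_def)
    finally show ?case using odd_fin[OF elim, of \<psi>] by (simp add: s_def)
  qed
  have lim: "(\<lambda>m. a i m) \<longlonglongrightarrow> 4 / pi * (pi * s i)" for i
  proof -
    have "(\<lambda>m. ((4 * real m + (-1)) * cb (m+i) * cb (m-(1+i))) * (pi * s i)) \<longlonglongrightarrow> 4 / pi * (pi * s i)"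
      by (intro tendsto_mult_right w_lim)
    moreover have "eventually (\<lambda>m. ((4 * real m + (-1)) * cb (m+i) * cb (m-(1+i))) * (pi * s i) = a i m) sequentially"
      using eventually_gt_at_top[of i] by eventually_elim (simp add: a_def)
    ultimately show ?thesis by (rule Lim_transform_eventually)
  qed
  have bound: "eventually (\<lambda>(i,m). norm (a i m) \<le> MM i) (at_top \<times>\<^sub>F sequentially)"
  proof (rule eventually_prod_sequentially[THEN iffD2])
    show "\<exists>N. \<forall>m\<ge>N. \<forall>i\<ge>N. (\<lambda>(i,m). norm (a i m) \<le> MM i) (i, m)"
    proof (intro exI[of _ 1] allI impI, unfold prod.case)
      fix i m :: nat assume i1: "1 \<le> i"
      have MM0: "MM i \<ge> 0" by (simp add: MM_def)
      show "norm (a i m) \<le> MM i"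
      proof (cases "i < m")
        case False then show ?thesis using MM0 by (simp add: a_def)
      next
        case True
        define p where "p = m + i"
        define q where "q = m - (1 + i)"
        have qp: "q \<le> p" by (simp add: p_def q_def)
        have e1: "2 * real p + 2 * real q + 2 = 4 * real m" using True by (simp add: p_def q_def of_nat_diff)
        have e2: "2 * real (p - q) + 1 = 4 * real i + 3" using True by (simp add: p_def q_def of_nat_diff)
        have wb: "4 * real m * cb p * cb q \<le> 6 * sqrt (real i)"
          using w_bound[OF qp] sqrt_le3[OF i1, of 3] unfolding e1 e2 by simp
        define A where "A = (4 * real m - 1) * cb p * cb q"
        have A0: "0 \<le> A" using True cb_pos[of p] cb_pos[of q] by (simp add: A_def)
        have "A \<le> 4 * real m * cb p * cb q" using cb_pos[of p] cb_pos[of q] by (simp add: A_def mult_right_mono)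
        from order.trans[OF this wb] have A6: "A \<le> 6 * sqrt (real i)" .
        have si: "s i \<le> 1 / (real i)\<^sup>2"
        proof -
          have "(2 * real i)\<^sup>2 \<le> (real (2*i+1))\<^sup>2" by (intro power_mono) auto
          then have "4 / (real (2*i+1))\<^sup>2 \<le> 4 / (2 * real i)\<^sup>2" using i1
            by (intro divide_left_mono) auto
          then show ?thesis using s0(2)[of i] by (simp add: power_mult_distrib)
        qed
        have "a i m = A * pi * s i" using True by (simp add: a_def A_def p_def q_def)
        also have "\<dots> \<le> (6 * sqrt (real i)) * pi * (1 / (real i)\<^sup>2)"
          using A0 A6 si s0(1)[of i] by (intro mult_mono) auto
        also have "\<dots> = MM i" by (simp add: MM_def)
        finally show ?thesis using A0 s0(1)[of i] \<open>a i m = A * pi * s i\<close> by simp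
      qed
    qed
  qed
  have T: "(\<lambda>m. \<Sum>i. a i m) \<longlonglongrightarrow> (\<Sum>i. 4 / pi * (pi * s i))"
    by (rule tannerys_theorem[THEN conjunct2, THEN conjunct2, OF lim bound MM_summable]) simp
  have "(\<lambda>i. 16 * ((sin (real (2*i+1) * \<psi>))\<^sup>2 / (real (2*i+1))\<^sup>2)) sums
        (16 * (if \<psi> \<le> pi/2 then pi * \<psi> / 4 else pi * (pi - \<psi>) / 4))"
    by (rule sums_mult[OF odd_series[OF assms]])
  moreover have "(\<lambda>i. 4 / pi * (pi * s i)) = (\<lambda>i. 16 * ((sin (real (2*i+1) * \<psi>))\<^sup>2 / (real (2*i+1))\<^sup>2))"
    by (rule ext) (simp add: s_def)
  ultimately have "(\<Sum>i. 4 / pi * (pi * s i)) = 16 * (if \<psi> \<le> pi/2 then pi * \<psi> / 4 else pi * (pi - \<psi>) / 4)"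
    by (simp add: sums_iff)
  also have "\<dots> = (if \<psi> \<le> pi / 2 then 4 * pi * \<psi> else 4 * pi\<^sup>2 - 4 * pi * \<psi>)"
    by (auto simp: power2_eq_square field_simps)
  finally have "(\<Sum>i. 4 / pi * (pi * s i)) = (if \<psi> \<le> pi / 2 then 4 * pi * \<psi> else 4 * pi\<^sup>2 - 4 * pi * \<psi>)" .
  with T have "(\<lambda>m. \<Sum>i. a i m) \<longlonglongrightarrow> (if \<psi> \<le> pi / 2 then 4 * pi * \<psi> else 4 * pi\<^sup>2 - 4 * pi * \<psi>)" by simp
  then show ?thesis
    by (rule Lim_transform_eventually) (use Q in \<open>simp add: eq_commute\<close>)
qed

lemma even_part:
  fixes \<psi> :: real
  assumes "0 \<le> \<psi>" "\<psi> \<le> pi"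
  shows "(\<lambda>m::nat. (4 * real m + 1) / 4 * (mu (2 * m) \<psi>)\<^sup>2)
           \<longlonglongrightarrow> (if \<psi> \<le> pi / 2 then 4 * pi * \<psi> else 12 * pi * \<psi> - 4 * pi\<^sup>2)"
proof -
  define s where "s i = (sin (real i * (2*\<psi>)))\<^sup>2 / (real i)\<^sup>2" for i
  have s0: "0 \<le> s i" "s i \<le> 1 / (real i)\<^sup>2" for i
    using sin_sq_le1[of "real i * (2*\<psi>)"] by (auto simp: s_def divide_right_mono)
  define b where "b i m = (if i = 0 then (4 * real m + 1) * pi / 2 * cb (m+0) * cb (m-0) * (4 * \<psi>\<^sup>2)
      else if i \<le> m then (4 * real m + 1) * pi * cb (m+i) * cb (m-i) * s i else 0)" for i m
  have Q: "(4 * real m + 1) / 4 * (mu (2 * m) \<psi>)\<^sup>2 = (\<Sum>i. b i m)" for m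
  proof -
    have "(\<Sum>i. b i m) = (\<Sum>i<Suc m. b i m)" by (rule suminf_finite) (auto simp: b_def)
    also have "\<dots> = b 0 m + (\<Sum>i<m. b (Suc i) m)" by (rule sum.lessThan_Suc_shift)
    also have "\<dots> = (4 * real m + 1) * pi / 2 * cb (m+0) * cb (m-0) * (4 * \<psi>\<^sup>2) +
      (\<Sum>i<m. (4 * real m + 1) * pi * cb (m + Suc i) * cb (m - Suc i) * s (Suc i))"
      by (simp add: b_def)
    finally show ?thesis using even_fin[of m \<psi>] by (simp add: s_def)
  qed
  define B where "B i = (if i = 0 then 8 * \<psi>\<^sup>2 else 4 * s i)" for i
  have lim: "(\<lambda>m. b i m) \<longlonglongrightarrow> B i" for i
  proof (cases "i = 0")
    case True
    have "(\<lambda>m. ((4 * real m + 1) * cb (m+0) * cb (m-0)) * (pi / 2 * (4 * \<psi>\<^sup>2))) \<longlonglongrightarrow> 4 / pi * (pi / 2 * (4 * \<psi>\<^sup>2))"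
      by (intro tendsto_mult_right w_lim)
    moreover have "4 / pi * (pi / 2 * (4 * \<psi>\<^sup>2)) = B i" using True by (simp add: B_def)
    moreover have "(\<lambda>m. ((4 * real m + 1) * cb (m+0) * cb (m-0)) * (pi / 2 * (4 * \<psi>\<^sup>2))) = (\<lambda>m. b i m)"
      using True by (simp add: b_def fun_eq_iff mult_ac)
    ultimately show ?thesis by simp
  next
    case False
    have L1: "(\<lambda>m. ((4 * real m + 1) * cb (m+i) * cb (m-i)) * (pi * s i)) \<longlonglongrightarrow> 4 / pi * (pi * s i)"
      by (intro tendsto_mult_right w_lim)
    have L2: "4 / pi * (pi * s i) = B i" using False by (simp add: B_def)
    have L3: "eventually (\<lambda>m. ((4 * real m + 1) * cb (m+i) * cb (m-i)) * (pi * s i) = b i m) sequentially"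
      using eventually_ge_at_top[of i] by eventually_elim (use False in \<open>simp add: b_def mult_ac\<close>)
    show ?thesis using Lim_transform_eventually[OF L1[unfolded L2] L3] .
  qed
  have bound: "eventually (\<lambda>(i,m). norm (b i m) \<le> MM i) (at_top \<times>\<^sub>F sequentially)"
  proof (rule eventually_prod_sequentially[THEN iffD2])
    show "\<exists>N. \<forall>m\<ge>N. \<forall>i\<ge>N. (\<lambda>(i,m). norm (b i m) \<le> MM i) (i, m)"
    proof (intro exI[of _ 1] allI impI, unfold prod.case)
      fix i m :: nat assume i1: "1 \<le> i"
      have MM0: "MM i \<ge> 0" by (simp add: MM_def)
      show "norm (b i m) \<le> MM i"
      proof (cases "i \<le> m")
        case False then show ?thesis using MM0 i1 by (simp add: b_def)
      next
        case True
        define p where "p = m + i"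
        define q where "q = m - i"
        have qp: "q \<le> p" by (simp add: p_def q_def)
        have e1: "2 * real p + 2 * real q + 2 = 4 * real m + 2" using True by (simp add: p_def q_def of_nat_diff)
        have e2: "2 * real (p - q) + 1 = 4 * real i + 1" using True by (simp add: p_def q_def of_nat_diff)
        have wb: "(4 * real m + 2) * cb p * cb q \<le> 6 * sqrt (real i)"
          using w_bound[OF qp] sqrt_le3[OF i1, of 1] unfolding e1 e2 by simp
        define A where "A = (4 * real m + 1) * cb p * cb q"
        have A0: "0 \<le> A" using cb_pos[of p] cb_pos[of q] by (simp add: A_def)
        have "A \<le> (4 * real m + 2) * cb p * cb q" using cb_pos[of p] cb_pos[of q] by (simp add: A_def mult_right_mono)
        from order.trans[OF this wb] have A6: "A \<le> 6 * sqrt (real i)" .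
        have beq: "b i m = A * pi * s i" using True i1 by (simp add: b_def A_def p_def q_def)
        also have "\<dots> \<le> (6 * sqrt (real i)) * pi * (1 / (real i)\<^sup>2)"
          using A0 A6 s0[of i] by (intro mult_mono) auto
        also have "\<dots> = MM i" by (simp add: MM_def)
        finally show ?thesis using A0 s0(1)[of i] beq by simp
      qed
    qed
  qed
  have T: "(\<lambda>m. \<Sum>i. b i m) \<longlonglongrightarrow> (\<Sum>i. B i)"
    by (rule tannerys_theorem[THEN conjunct2, THEN conjunct2, OF lim bound MM_summable]) simp
  have s1: "(\<lambda>i. 4 * s i) sums (4 * (if 2*\<psi> \<le> pi then 2*\<psi> * (pi - 2*\<psi>) / 2 else (2*pi - 2*\<psi>) * (2*\<psi> - pi) / 2))"
    unfolding s_def by (rule sums_mult) (rule sin_sq_series_ext, use assms in auto)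
  have s2: "(\<lambda>i. if i = 0 then 8 * \<psi>\<^sup>2 else 0) sums (8 * \<psi>\<^sup>2)"
    using sums_single[of 0 "\<lambda>_. 8 * \<psi>\<^sup>2"] by simp
  have "B = (\<lambda>i. 4 * s i + (if i = 0 then 8 * \<psi>\<^sup>2 else 0))"
    by (rule ext) (simp add: B_def s_def)
  then have "B sums (4 * (if 2*\<psi> \<le> pi then 2*\<psi> * (pi - 2*\<psi>) / 2 else (2*pi - 2*\<psi>) * (2*\<psi> - pi) / 2) + 8 * \<psi>\<^sup>2)"
    using sums_add[OF s1 s2] by simp
  then have "(\<Sum>i. B i) = 4 * (if 2*\<psi> \<le> pi then 2*\<psi> * (pi - 2*\<psi>) / 2 else (2*pi - 2*\<psi>) * (2*\<psi> - pi) / 2) + 8 * \<psi>\<^sup>2"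
    by (simp add: sums_iff)
  also have "\<dots> = (if \<psi> \<le> pi / 2 then 4 * pi * \<psi> else 12 * pi * \<psi> - 4 * pi\<^sup>2)"
    by (auto simp: power2_eq_square field_simps)
  finally have "(\<lambda>m. \<Sum>i. b i m) \<longlonglongrightarrow> (if \<psi> \<le> pi / 2 then 4 * pi * \<psi> else 12 * pi * \<psi> - 4 * pi\<^sup>2)"
    using T by simp
  then show ?thesis using Q by simp
qed


theorem theorem5:
  fixes \<psi> :: real
  assumes "0 \<le> \<psi>" and "\<psi> \<le> pi"
  shows "(\<lambda>m::nat. (4 * real m - 1) / 4 * (mu (2 * m - 1) \<psi>)\<^sup>2)
           \<longlonglongrightarrow> (if \<psi> \<le> pi / 2 then 4 * pi * \<psi> else 4 * pi\<^sup>2 - 4 * pi * \<psi>) \<and>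
         (\<lambda>m::nat. (4 * real m + 1) / 4 * (mu (2 * m) \<psi>)\<^sup>2)
           \<longlonglongrightarrow> (if \<psi> \<le> pi / 2 then 4 * pi * \<psi> else 12 * pi * \<psi> - 4 * pi\<^sup>2)"
  using odd_part[OF assms] even_part[OF assms] by blast

end
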